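(* Let $F:\mathbb{R}^n\to\mathbb{R}$ be $C^3$ with $\nabla F$ and $\nabla^2F$ globally Lipschitz continuous. Let $\xi:\mathbb{R}\to\mathbb{R}^n$ be a continuous (hence bounded) periodic exploration signal with period $T>0$ satisfying $$\frac1T\int_t^{t+T}\xi(\tau)\xi(\tau)^{\top}\,d\tau=I\quad\text{for all } t,$$ where $I$ is the $n\times n$ identity matrix. For $\epsilon>0$ define $\beta(t,x):=-\hat\nabla F(x;\xi(t),\epsilon)=-\frac{1}{2\epsilon}\xi(t)\big[F(x+\epsilon\xi(t))-F(x-\epsilon\xi(t))\big]$. Let $\alpha>0$, let $K\in\mathbb{N}$, and let $\{x(t):KT\le t\le (K+1)T\}$ be the solution of the ODE $\dot x(t)=\alpha\,\beta(t,x(t))$ with initial condition $x(KT)=x$. Let $\mathcal{X}\subseteq\mathbb{R}^n$ be a nonempty closed convex set with Euclidean projection $\mathrm{Proj}_{\mathcal X}$, and define $$x^{+}:=\mathrm{Proj}_{\mathcal X}\Big\{x+\alpha\int_{KT}^{(K+1)T}\beta(\tau,x(\tau))\,d\tau\Big\}.$$ Then $x^{+}$ admits the representation $$x^{+}=\mathrm{Proj}_{\mathcal X}\big\{x-\alpha T\,(\nabla F(x)+s_K(x))\big\},$$ where $s_K(x)=O(\alpha+\epsilon^2)$: for every $R>0$ and $\alpha_0>0$ there is a constant $C$ (depending on $R,\alpha_0,T,F,\xi$ but not on $K$, $\alpha$, or $\epsilon\in(0,1]$) such that $\|s_K(x)\|_2\le C(\alpha+\epsilon^2)$ whenever $\|x\|_2\le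 R$, $0<\alpha\le\alpha_0$, $0<\epsilon\le 1$. *)

theory Defs
  imports "HOL-Analysis.Analysis"
begin

definition outer :: "real^'n \<Rightarrow> real^'n \<Rightarrow> real^'n^'n" where
  "outer u v = (\<chi> i j. u $ i * v $ j)"

definition efd_beta :: "(real^'n \<Rightarrow> real) \<Rightarrow> (real \<Rightarrow> real^'n) \<Rightarrow> real \<Rightarrow> real \<Rightarrow> real^'n \<Rightarrow> real^'n" where
  "efd_beta F \<xi> \<epsilon> t x =
     - ((1 / (2 * \<epsilon>)) * (F (x + \<epsilon> *\<^sub>R \<xi> t) - F (x - \<epsilon> *\<^sub>R \<xi> t))) *\<^sub>R \<xi> t"

end

theory Submission
  imports Defs
begin


lemma matvec_bound:
  fixes A :: "real^'n^'m"
  shows "norm (A *v x) \<le> real CARD('m) * real CARD('n) * norm A * norm x"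
proof -
  have "onorm ((*v) A) \<le> real CARD('m) * real CARD('n) * norm A"
    by (rule onorm_le_matrix_component) (rule order_trans[OF component_le_norm_cart Finite_Cartesian_Product.norm_nth_le])
  moreover have "norm (A *v x) \<le> onorm ((*v) A) * norm x"
    by (rule onorm) simp
  ultimately show ?thesis by (meson mult_right_mono norm_ge_zero order_trans)
qed

lemma mvt_abs:
  fixes f :: "real \<Rightarrow> real"
  assumes "a \<le> b" "\<And>t. t \<in> {a..b} \<Longrightarrow> (f has_real_derivative f' t) (at t within {a..b})"
    "\<And>t. t \<in> {a..b} \<Longrightarrow> \<bar>f' t\<bar> \<le> B"
  shows "\<bar>f b - f a\<bar> \<le> B * (b - a)"
proof -
  obtain z where z: "z \<in> {a..b}" "f b - f a = f' z * (b - a)"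
    using mvt_very_simple[of a b f "\<lambda>t. (*) (f' t)"] assms(1,2)
    by (auto simp: has_field_derivative_def mult.commute)
  have "\<bar>f' z * (b - a)\<bar> = \<bar>f' z\<bar> * (b - a)" using assms(1) by (simp add: abs_mult)
  also have "\<dots> \<le> B * (b - a)" using assms(3)[OF z(1)] assms(1) by (simp add: mult_right_mono)
  finally show ?thesis using z by simp
qed

lemma mvt_nonpos:
  fixes f :: "real \<Rightarrow> real"
  assumes "a \<le> b" "\<And>t. t \<in> {a..b} \<Longrightarrow> (f has_real_derivative f' t) (at t within {a..b})"
    "\<And>t. t \<in> {a..b} \<Longrightarrow> f' t \<le> 0"
  shows "f b \<le> f a"
proof -
  obtain z where z: "z \<in> {a..b}" "f b - f a = f' z * (b - a)"
    using mvt_very_simple[of a b f "\<lambda>t. (*) (f' t)"] assms(1,2)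
    by (auto simp: has_field_derivative_def mult.commute)
  have "f' z * (b - a) \<le> 0" using assms(3)[OF z(1)] assms(1) by (simp add: mult_nonpos_nonneg)
  then show ?thesis using z by simp
qed

lemma line_deriv_F:
  fixes F :: "real^'n \<Rightarrow> real"
  assumes "\<forall>x. (F has_derivative (\<lambda>h. gradF x \<bullet> h)) (at x)"
  shows "((\<lambda>s. F (y + s *\<^sub>R h)) has_real_derivative (gradF (y + s *\<^sub>R h) \<bullet> h)) (at s within S)"
proof -
  have l: "((\<lambda>s. y + s *\<^sub>R h) has_derivative (\<lambda>s. s *\<^sub>R h)) (at s within S)"
    by (auto intro!: derivative_eq_intros)
  have "((\<lambda>s. F (y + s *\<^sub>R h)) has_derivative (\<lambda>u. gradF (y + s *\<^sub>R h) \<bullet> (u *\<^sub>R h))) (at s within S)"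
    using has_derivative_compose[OF l, of F "\<lambda>k. gradF (y + s *\<^sub>R h) \<bullet> k"] assms
    by (simp add: o_def has_derivative_at_withinI)
  then show ?thesis unfolding has_field_derivative_def by (rule has_derivative_eq_rhs) (auto simp: fun_eq_iff)
qed

lemma line_deriv_grad:
  fixes gradF :: "real^'n \<Rightarrow> real^'n"
  assumes "\<forall>x. (gradF has_derivative (\<lambda>h. hessF x *v h)) (at x)"
  shows "((\<lambda>s. gradF (y + s *\<^sub>R h) \<bullet> v) has_real_derivative ((hessF (y + s *\<^sub>R h) *v h) \<bullet> v)) (at s within S)"
proof -
  have l: "((\<lambda>s. y + s *\<^sub>R h) has_derivative (\<lambda>s. s *\<^sub>R h)) (at s within S)"
    by (auto intro!: derivative_eq_intros)
  have g: "((\<lambda>s. gradF (y + s *\<^sub>R h)) has_derivative (\<lambda>u. hessF (y + s *\<^sub>R h) *v (u *\<^sub>R h))) (at s within S)"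
    using has_derivative_compose[OF l, of gradF "\<lambda>k. hessF (y + s *\<^sub>R h) *v k"] assms
    by (simp add: o_def has_derivative_at_withinI)
  have "((\<lambda>s. gradF (y + s *\<^sub>R h) \<bullet> v) has_derivative (\<lambda>u. (hessF (y + s *\<^sub>R h) *v (u *\<^sub>R h)) \<bullet> v)) (at s within S)"
    using has_derivative_inner_left[OF g] by simp
  then show ?thesis unfolding has_field_derivative_def
    by (rule has_derivative_eq_rhs) (auto simp: fun_eq_iff matrix_vector_mult_scaleR)
qed

lemma lip_le:
  assumes "L-lipschitz_on UNIV f"
  shows "norm (f a - f b) \<le> L * norm (a - b)"
  using assms by (auto simp: lipschitz_on_def dist_norm)

lemma lip_grow:
  assumes "L-lipschitz_on UNIV f"
  shows "norm (f z) \<le> norm (f 0) + L * norm z"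
proof -
  have "norm (f z - f 0) \<le> L * norm z" using lip_le[OF assms, of z 0] by simp
  then show ?thesis by (metis add.commute diff_le_eq norm_triangle_ineq2 order_trans)
qed

lemma scale_norm_le: "0 \<le> s \<Longrightarrow> s \<le> 1 \<Longrightarrow> norm (s *\<^sub>R h) \<le> norm h"
  by (simp add: mult_left_le_one_le)

lemma diff_bound:
  fixes F :: "real^'n \<Rightarrow> real"
  assumes Fd: "\<forall>x. (F has_derivative (\<lambda>h. gradF x \<bullet> h)) (at x)"
    and Lg: "Lg-lipschitz_on UNIV gradF"
  shows "\<bar>F (y + h) - F (y - h)\<bar> \<le> 2 * norm h * (norm (gradF 0) + Lg * (norm y + norm h))"
proof -
  define g where "g s = F (y + s *\<^sub>R h) - F (y + s *\<^sub>R (-h))" for s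
  define B where "B = norm (gradF 0) + Lg * (norm y + norm h)"
  have Lg0: "Lg \<ge> 0" using Lg by (auto simp: lipschitz_on_def)
  have d: "(g has_real_derivative ((gradF (y + t *\<^sub>R h) + gradF (y + t *\<^sub>R (-h))) \<bullet> h)) (at t within {0..1})" for t
    unfolding g_def
    using DERIV_diff[OF line_deriv_F[OF Fd, of y h t] line_deriv_F[OF Fd, of y "-h" t]]
    by (simp add: inner_add_left)
  have gb: "norm (gradF (y + z)) \<le> B" if "norm z \<le> norm h" for z
  proof -
    have "norm (gradF (y + z)) \<le> norm (gradF 0) + Lg * norm (y + z)" by (rule lip_grow[OF Lg])
    also have "\<dots> \<le> B" unfolding B_def using Lg0 that
      by (intro add_left_mono mult_left_mono) (auto intro: order_trans[OF norm_triangle_ineq])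
    finally show ?thesis .
  qed
  have bnd: "\<bar>(gradF (y + t *\<^sub>R h) + gradF (y + t *\<^sub>R (-h))) \<bullet> h\<bar> \<le> 2 * norm h * B" if "t \<in> {0..1}" for t
  proof -
    have "\<bar>(gradF (y + t *\<^sub>R h) + gradF (y + t *\<^sub>R (-h))) \<bullet> h\<bar>
       \<le> norm (gradF (y + t *\<^sub>R h) + gradF (y + t *\<^sub>R (-h))) * norm h" by (rule Cauchy_Schwarz_ineq2)
    also have "\<dots> \<le> (B + B) * norm h"
      using that by (intro mult_right_mono order_trans[OF norm_triangle_ineq] add_mono gb) (auto intro: mult_left_le_one_le)
    finally show ?thesis by (simp add: algebra_simps)
  qed
  have "\<bar>g 1 - g 0\<bar> \<le> 2 * norm h * B * (1 - 0)"
    by (rule mvt_abs[OF _ d bnd]) auto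
  then show ?thesis by (simp add: g_def B_def)
qed

lemma diff_lip:
  fixes F :: "real^'n \<Rightarrow> real"
  assumes Fd: "\<forall>x. (F has_derivative (\<lambda>h. gradF x \<bullet> h)) (at x)"
    and Lg: "Lg-lipschitz_on UNIV gradF"
  shows "\<bar>(F (y1 + h) - F (y1 - h)) - (F (y2 + h) - F (y2 - h))\<bar> \<le> 2 * Lg * norm h * norm (y1 - y2)"
proof -
  define d where "d = y1 - y2"
  define g where "g s = F ((y2 + h) + s *\<^sub>R d) - F ((y2 - h) + s *\<^sub>R d)" for s
  have dv: "(g has_real_derivative ((gradF ((y2 + h) + t *\<^sub>R d) - gradF ((y2 - h) + t *\<^sub>R d)) \<bullet> d)) (at t within {0..1})" for t
    unfolding g_def
    using DERIV_diff[OF line_deriv_F[OF Fd, of "y2 + h" d t] line_deriv_F[OF Fd, of "y2 - h" d t]]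
    by (simp add: inner_diff_left)
  have bnd: "\<bar>(gradF ((y2 + h) + t *\<^sub>R d) - gradF ((y2 - h) + t *\<^sub>R d)) \<bullet> d\<bar> \<le> 2 * Lg * norm h * norm d" for t
  proof -
    have "\<bar>(gradF ((y2 + h) + t *\<^sub>R d) - gradF ((y2 - h) + t *\<^sub>R d)) \<bullet> d\<bar>
       \<le> norm (gradF ((y2 + h) + t *\<^sub>R d) - gradF ((y2 - h) + t *\<^sub>R d)) * norm d" by (rule Cauchy_Schwarz_ineq2)
    also have "\<dots> \<le> (Lg * norm ((y2 + h + t *\<^sub>R d) - (y2 - h + t *\<^sub>R d))) * norm d"
      by (intro mult_right_mono lip_le[OF Lg]) auto
    also have "(y2 + h + t *\<^sub>R d) - (y2 - h + t *\<^sub>R d) = 2 *\<^sub>R h"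
      by (simp add: algebra_simps scaleR_2)
    finally show ?thesis by (simp add: algebra_simps)
  qed
  have "\<bar>g 1 - g 0\<bar> \<le> 2 * Lg * norm h * norm d * (1 - 0)"
    by (rule mvt_abs[OF _ dv bnd]) auto
  then show ?thesis by (simp add: g_def d_def algebra_simps)
qed


lemma mv_uminus: fixes A :: "real^'n^'m" shows "A *v (- x) = - (A *v x)"
  using matrix_vector_mult_scaleR[of A "-1" x] by simp

lemma taylor3:
  fixes F :: "real^'n \<Rightarrow> real"
  assumes Fd: "\<forall>x. (F has_derivative (\<lambda>h. gradF x \<bullet> h)) (at x)"
    and Gd: "\<forall>x. (gradF has_derivative (\<lambda>h. hessF x *v h)) (at x)"
    and LH: "LH-lipschitz_on UNIV hessF"
  shows "\<bar>F (y + h) - F (y - h) - 2 * (gradF y \<bullet> h)\<bar>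
           \<le> 2 * (real CARD('n) * real CARD('n)) * LH * norm h ^ 3"
proof -
  define c where "c = real CARD('n) * real CARD('n)"
  define B where "B = 2 * c * LH * norm h ^ 3"
  have LH0: "LH \<ge> 0" using LH by (auto simp: lipschitz_on_def)
  define \<phi> where "\<phi> r = gradF (y + r *\<^sub>R h) \<bullet> h + gradF (y + r *\<^sub>R (-h)) \<bullet> h" for r
  have dphi: "(\<phi> has_real_derivative (((hessF (y + r *\<^sub>R h) - hessF (y + r *\<^sub>R (-h))) *v h) \<bullet> h)) (at r within S)" for r S
    unfolding \<phi>_def
    using DERIV_add[OF line_deriv_grad[OF Gd, of y h h r] line_deriv_grad[OF Gd, of y "-h" h r]]
    by (simp add: mv_uminus algebra_simps)
  have bphi: "\<bar>((hessF (y + r *\<^sub>R h) - hessF (y + r *\<^sub>R (-h))) *v h) \<bullet> h\<bar> \<le> B" if "r \<in> {0..1}" for r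
  proof -
    have "\<bar>((hessF (y + r *\<^sub>R h) - hessF (y + r *\<^sub>R (-h))) *v h) \<bullet> h\<bar>
        \<le> norm ((hessF (y + r *\<^sub>R h) - hessF (y + r *\<^sub>R (-h))) *v h) * norm h" by (rule Cauchy_Schwarz_ineq2)
    also have "\<dots> \<le> (c * norm (hessF (y + r *\<^sub>R h) - hessF (y + r *\<^sub>R (-h))) * norm h) * norm h"
      unfolding c_def by (intro mult_right_mono matvec_bound) auto
    also have "\<dots> \<le> (c * (LH * norm ((y + r *\<^sub>R h) - (y + r *\<^sub>R (-h)))) * norm h) * norm h"
      unfolding c_def by (intro mult_right_mono mult_left_mono lip_le[OF LH]) auto
    also have "(y + r *\<^sub>R h) - (y + r *\<^sub>R (-h)) = (2 * r) *\<^sub>R h"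
    proof -
      have "(y + r *\<^sub>R h) - (y + r *\<^sub>R (-h)) = r *\<^sub>R h + r *\<^sub>R h" by simp
      also have "\<dots> = (2 * r) *\<^sub>R h" by (metis scaleR_add_left mult_2)
      finally show ?thesis .
    qed
    also have "(c * (LH * norm ((2 * r) *\<^sub>R h)) * norm h) * norm h = (2 * r) * (c * LH * norm h ^ 3)"
      using that by (simp add: power3_eq_cube)
    also have "\<dots> \<le> 2 * (c * LH * norm h ^ 3)"
      using that LH0 unfolding c_def by (intro mult_right_mono) auto
    finally show ?thesis unfolding B_def by simp
  qed
  have phi_b: "\<bar>\<phi> s - \<phi> 0\<bar> \<le> B" if "s \<in> {0..1}" for s
  proof -
    have "\<bar>\<phi> s - \<phi> 0\<bar> \<le> B * (s - 0)"
      by (rule mvt_abs[OF _ dphi bphi]) (use that in auto)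
    also have "\<dots> \<le> B" using that LH0 unfolding B_def c_def
      by (auto intro!: mult_left_mono mult_right_le_one_le)
    finally show ?thesis .
  qed
  define g where "g s = F (y + s *\<^sub>R h) - F (y + s *\<^sub>R (-h)) - 2 * s * (gradF y \<bullet> h)" for s
  have dg: "(g has_real_derivative (\<phi> t - \<phi> 0)) (at t within {0..1})" for t
  proof -
    have "(g has_real_derivative (gradF (y + t *\<^sub>R h) \<bullet> h - gradF (y + t *\<^sub>R (-h)) \<bullet> (-h) - 2 * (gradF y \<bullet> h))) (at t within {0..1})"
      unfolding g_def
      by (intro DERIV_diff line_deriv_F[OF Fd]) (auto intro!: derivative_eq_intros)
    then show ?thesis by (simp add: \<phi>_def)
  qed
  have "\<bar>g 1 - g 0\<bar> \<le> B * (1 - 0)"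
    by (rule mvt_abs[OF _ dg phi_b]) auto
  then show ?thesis by (simp add: g_def B_def c_def)
qed


lemma beta_bound:
  fixes F :: "real^'n \<Rightarrow> real"
  assumes Fd: "\<forall>x. (F has_derivative (\<lambda>h. gradF x \<bullet> h)) (at x)"
    and Lg: "Lg-lipschitz_on UNIV gradF" and e: "0 < \<epsilon>" "\<epsilon> \<le> 1"
  shows "norm (efd_beta F \<xi> \<epsilon> t y) \<le> norm (\<xi> t) ^ 2 * (norm (gradF 0) + Lg * (norm y + norm (\<xi> t)))"
proof -
  define v where "v = \<xi> t"
  have Lg0: "Lg \<ge> 0" using Lg by (auto simp: lipschitz_on_def)
  have D: "\<bar>F (y + \<epsilon> *\<^sub>R v) - F (y - \<epsilon> *\<^sub>R v)\<bar> \<le> 2 * (\<epsilon> * norm v) * (norm (gradF 0) + Lg * (norm y + \<epsilon> * norm v))"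
    using diff_bound[OF Fd Lg, of y "\<epsilon> *\<^sub>R v"] e by simp
  also have "\<dots> \<le> 2 * (\<epsilon> * norm v) * (norm (gradF 0) + Lg * (norm y + norm v))"
    using e Lg0 by (intro mult_left_mono add_left_mono) (auto intro: mult_left_le_one_le)
  finally have D2: "\<bar>F (y + \<epsilon> *\<^sub>R v) - F (y - \<epsilon> *\<^sub>R v)\<bar> \<le> 2 * (\<epsilon> * norm v) * (norm (gradF 0) + Lg * (norm y + norm v))" .
  have "norm (efd_beta F \<xi> \<epsilon> t y) = \<bar>F (y + \<epsilon> *\<^sub>R v) - F (y - \<epsilon> *\<^sub>R v)\<bar> / (2 * \<epsilon>) * norm v"
    using e by (simp add: efd_beta_def v_def abs_mult)
  also have "\<dots> \<le> (2 * (\<epsilon> * norm v) * (norm (gradF 0) + Lg * (norm y + norm v))) / (2 * \<epsilon>) * norm v"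
    using e D2 by (intro mult_right_mono divide_right_mono) auto
  also have "\<dots> = norm v ^ 2 * (norm (gradF 0) + Lg * (norm y + norm v))"
    using e by (simp add: power2_eq_square field_simps)
  finally show ?thesis by (simp add: v_def)
qed

lemma beta_lip:
  fixes F :: "real^'n \<Rightarrow> real"
  assumes Fd: "\<forall>x. (F has_derivative (\<lambda>h. gradF x \<bullet> h)) (at x)"
    and Lg: "Lg-lipschitz_on UNIV gradF" and e: "0 < \<epsilon>"
  shows "norm (efd_beta F \<xi> \<epsilon> t y1 - efd_beta F \<xi> \<epsilon> t y2) \<le> Lg * norm (\<xi> t) ^ 2 * norm (y1 - y2)"
proof -
  define v where "v = \<xi> t"
  have D: "\<bar>(F (y1 + \<epsilon> *\<^sub>R v) - F (y1 - \<epsilon> *\<^sub>R v)) - (F (y2 + \<epsilon> *\<^sub>R v) - F (y2 - \<epsilon> *\<^sub>R v))\<bar> \<le> 2 * Lg * (\<epsilon> * norm v) * norm (y1 - y2)"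
    using diff_lip[OF Fd Lg, of y1 "\<epsilon> *\<^sub>R v" y2] e by simp
  have "efd_beta F \<xi> \<epsilon> t y1 - efd_beta F \<xi> \<epsilon> t y2
     = - ((1 / (2 * \<epsilon>)) * ((F (y1 + \<epsilon> *\<^sub>R v) - F (y1 - \<epsilon> *\<^sub>R v)) - (F (y2 + \<epsilon> *\<^sub>R v) - F (y2 - \<epsilon> *\<^sub>R v)))) *\<^sub>R v"
    by (simp add: efd_beta_def v_def algebra_simps)
  then have "norm (efd_beta F \<xi> \<epsilon> t y1 - efd_beta F \<xi> \<epsilon> t y2)
     = \<bar>(F (y1 + \<epsilon> *\<^sub>R v) - F (y1 - \<epsilon> *\<^sub>R v)) - (F (y2 + \<epsilon> *\<^sub>R v) - F (y2 - \<epsilon> *\<^sub>R v))\<bar> / (2 * \<epsilon>) * norm v"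
    using e by (simp add: abs_mult)
  also have "\<dots> \<le> (2 * Lg * (\<epsilon> * norm v) * norm (y1 - y2)) / (2 * \<epsilon>) * norm v"
    using e D by (intro mult_right_mono divide_right_mono) auto
  also have "\<dots> = Lg * norm v ^ 2 * norm (y1 - y2)"
    using e by (simp add: power2_eq_square field_simps)
  finally show ?thesis by (simp add: v_def)
qed

lemma beta_approx:
  fixes F :: "real^'n \<Rightarrow> real"
  assumes Fd: "\<forall>x. (F has_derivative (\<lambda>h. gradF x \<bullet> h)) (at x)"
    and Gd: "\<forall>x. (gradF has_derivative (\<lambda>h. hessF x *v h)) (at x)"
    and LH: "LH-lipschitz_on UNIV hessF" and e: "0 < \<epsilon>"
  shows "norm (efd_beta F \<xi> \<epsilon> t y + (gradF y \<bullet> \<xi> t) *\<^sub>R \<xi> t)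
           \<le> (real CARD('n) * real CARD('n)) * LH * \<epsilon>\<^sup>2 * norm (\<xi> t) ^ 4"
proof -
  define v where "v = \<xi> t"
  define c where "c = real CARD('n) * real CARD('n)"
  have D: "\<bar>F (y + \<epsilon> *\<^sub>R v) - F (y - \<epsilon> *\<^sub>R v) - 2 * (gradF y \<bullet> (\<epsilon> *\<^sub>R v))\<bar> \<le> 2 * c * LH * (\<epsilon> * norm v) ^ 3"
    using taylor3[OF Fd Gd LH, of y "\<epsilon> *\<^sub>R v"] e by (simp add: c_def)
  have "efd_beta F \<xi> \<epsilon> t y + (gradF y \<bullet> \<xi> t) *\<^sub>R \<xi> t
     = - ((1 / (2 * \<epsilon>)) * (F (y + \<epsilon> *\<^sub>R v) - F (y - \<epsilon> *\<^sub>R v) - 2 * (gradF y \<bullet> (\<epsilon> *\<^sub>R v)))) *\<^sub>R v"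
    using e by (simp add: efd_beta_def v_def algebra_simps)
  then have "norm (efd_beta F \<xi> \<epsilon> t y + (gradF y \<bullet> \<xi> t) *\<^sub>R \<xi> t)
     = \<bar>F (y + \<epsilon> *\<^sub>R v) - F (y - \<epsilon> *\<^sub>R v) - 2 * (gradF y \<bullet> (\<epsilon> *\<^sub>R v))\<bar> / (2 * \<epsilon>) * norm v"
    using e by (simp add: abs_mult)
  also have "\<dots> \<le> (2 * c * LH * (\<epsilon> * norm v) ^ 3) / (2 * \<epsilon>) * norm v"
    using e D by (intro mult_right_mono divide_right_mono) auto
  also have "\<dots> = c * LH * \<epsilon>\<^sup>2 * norm v ^ 4"
    using e by (simp add: power2_eq_square field_simps power3_eq_cube power4_eq_xxxx)
  finally show ?thesis by (simp add: v_def c_def)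
qed



lemma outer_mv: "outer u u *v g = (g \<bullet> u) *\<^sub>R (u :: real^'n)"
  by (simp add: vec_eq_iff outer_def matrix_vector_mult_def inner_vec_def sum_distrib_left mult.commute mult.left_commute)

lemma bl_mv: "bounded_linear (\<lambda>A :: real^'n^'m. A *v g)"
proof -
  have "linear (\<lambda>A :: real^'n^'m. A *v g)"
    by (rule linearI) (auto simp: vec_eq_iff matrix_vector_mult_def sum_distrib_left algebra_simps sum.distrib)
  then show ?thesis by (simp add: linear_conv_bounded_linear)
qed

lemma xi_shift:
  assumes "\<forall>t. \<xi> (t + T) = \<xi> t"
  shows "\<xi> (t + real k * T) = \<xi> t"
proof (induction k)
  case (Suc k)
  have "\<xi> (t + real (Suc k) * T) = \<xi> ((t + real k * T) + T)" by (simp add: algebra_simps)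
  also have "\<dots> = \<xi> t" using assms Suc by simp
  finally show ?case .
qed simp

lemma cont_comp_F:
  fixes F :: "'a::real_inner \<Rightarrow> real"
  assumes "\<forall>x. (F has_derivative (\<lambda>h. gradF x \<bullet> h)) (at x)" "continuous_on S f"
  shows "continuous_on S (\<lambda>t. F (f t))"
proof -
  have "continuous_on UNIV F"
    using assms(1) by (meson continuous_at_imp_continuous_on has_derivative_continuous)
  then show ?thesis using continuous_on_compose2[OF _ assms(2)] by blast
qed

lemma cont_beta:
  fixes F :: "real^'n \<Rightarrow> real"
  assumes "\<forall>x. (F has_derivative (\<lambda>h. gradF x \<bullet> h)) (at x)" "continuous_on S y" "continuous_on S \<xi>"
  shows "continuous_on S (\<lambda>t. efd_beta F \<xi> \<epsilon> t (y t))"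
  unfolding efd_beta_def
  by (intro continuous_intros cont_comp_F[OF assms(1)] assms(2,3))



theorem lemma2:
  fixes F :: "real^'n \<Rightarrow> real"
    and gradF :: "real^'n \<Rightarrow> real^'n"
    and hessF :: "real^'n \<Rightarrow> real^'n^'n"
    and \<xi> :: "real \<Rightarrow> real^'n"
    and T :: real
  assumes F_deriv: "\<forall>x. (F has_derivative (\<lambda>h. gradF x \<bullet> h)) (at x)"
    and grad_deriv: "\<forall>x. (gradF has_derivative (\<lambda>h. hessF x *v h)) (at x)"
    and hess_C1: "\<exists>D3 :: real^'n \<Rightarrow> (real^'n, real^'n^'n) blinfun.
                    (\<forall>x. (hessF has_derivative blinfun_apply (D3 x)) (at x)) \<and> continuous_on UNIV D3"
    and grad_lip: "\<exists>L. L-lipschitz_on UNIV gradF"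
    and hess_lip: "\<exists>L. L-lipschitz_on UNIV hessF"
    and T_pos: "T > 0"
    and xi_cont: "continuous_on UNIV \<xi>"
    and xi_per: "\<forall>t. \<xi> (t + T) = \<xi> t"
    and xi_pe: "\<forall>t. (1 / T) *\<^sub>R integral {t..t + T} (\<lambda>\<tau>. outer (\<xi> \<tau>) (\<xi> \<tau>)) = mat 1"
  shows "\<forall>R>0. \<forall>\<alpha>0>0. \<exists>C. \<forall>(K::nat) \<alpha> \<epsilon> x (xs :: real \<Rightarrow> real^'n).
           norm x \<le> R \<and> 0 < \<alpha> \<and> \<alpha> \<le> \<alpha>0 \<and> 0 < \<epsilon> \<and> \<epsilon> \<le> 1 \<and>
           xs (real K * T) = x \<and>
           (\<forall>t\<in>{real K * T .. real (Suc K) * T}.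
              (xs has_vector_derivative (\<alpha> *\<^sub>R efd_beta F \<xi> \<epsilon> t (xs t)))
                (at t within {real K * T .. real (Suc K) * T}))
           \<longrightarrow> (\<exists>s. norm s \<le> C * (\<alpha> + \<epsilon>\<^sup>2) \<and>
                 (\<forall>X. X \<noteq> {} \<and> closed X \<and> convex X \<longrightarrow>
                    closest_point X (x + \<alpha> *\<^sub>R integral {real K * T .. real (Suc K) * T}
                                         (\<lambda>\<tau>. efd_beta F \<xi> \<epsilon> \<tau> (xs \<tau>)))
                    = closest_point X (x - (\<alpha> * T) *\<^sub>R (gradF x + s))))"
proof (intro allI impI)
  fix R \<alpha>0 :: real
  assume R0: "R > 0" and a00: "\<alpha>0 > 0"
  obtain Lg where Lg: "Lg-lipschitz_on UNIV gradF" using grad_lip by blast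
  obtain LH where LH: "LH-lipschitz_on UNIV hessF" using hess_lip by blast
  have Lg0: "0 \<le> Lg" using Lg by (auto simp: lipschitz_on_def)
  have LH0: "0 \<le> LH" using LH by (auto simp: lipschitz_on_def)
  have "compact (\<xi> ` {0..T})"
    by (rule compact_continuous_image[OF continuous_on_subset[OF xi_cont]]) auto
  then obtain M0 where M0: "\<forall>t\<in>{0..T}. norm (\<xi> t) \<le> M0"
    by (auto simp: bounded_iff dest!: compact_imp_bounded)
  define M where "M = max M0 0"
  have M_nn: "0 \<le> M" by (simp add: M_def)
  have Mb: "norm (\<xi> \<tau>) \<le> M" if "\<tau> \<in> {real K * T .. real (Suc K) * T}" for K \<tau>
  proof -
    have "\<xi> \<tau> = \<xi> ((\<tau> - real K * T) + real K * T)" by simp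
    also have "\<dots> = \<xi> (\<tau> - real K * T)" by (rule xi_shift[OF xi_per])
    finally have e: "\<xi> \<tau> = \<xi> (\<tau> - real K * T)" .
    have "\<tau> - real K * T \<in> {0..T}" using that by (auto simp: algebra_simps)
    then show ?thesis using M0 e unfolding M_def by fastforce
  qed
  define G0 where "G0 = norm (gradF 0)"
  define c where "c = real CARD('n) * real CARD('n)"
  define A0 where "A0 = M^2 * (G0 + Lg * M)"
  define B0 where "B0 = M^2 * Lg"
  define c0 where "c0 = A0 + B0 + 1"
  define W where "W = exp (4 * \<alpha>0 * c0 * T) * (1 + R^2)"
  define G where "G = A0 + B0 * W"
  define C where "C = Lg * M^2 * G * T + c * LH * M^4"
  have A0_nn: "0 \<le> A0" unfolding A0_def G0_def using Lg0 M_nn by simp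
  have B0_nn: "0 \<le> B0" unfolding B0_def using Lg0 M_nn by simp
  have c0_pos: "0 < c0" unfolding c0_def using A0_nn B0_nn by simp
  have W_nn: "0 \<le> W" unfolding W_def by (simp add: add_nonneg_nonneg)
  have G_nn: "0 \<le> G" unfolding G_def using A0_nn B0_nn W_nn by simp
  have c_nn: "0 \<le> c" unfolding c_def by simp
  have r_le: "r \<le> 1 + r^2" for r :: real
  proof -
    have "0 \<le> (r - 1)^2" by simp
    then have "2 * r \<le> r^2 + 1" by (simp add: power2_diff)
    moreover have "0 \<le> r^2" by simp
    ultimately show ?thesis by linarith
  qed
  show "\<exists>C. \<forall>(K::nat) \<alpha> \<epsilon> x (xs :: real \<Rightarrow> real^'n).
           norm x \<le> R \<and> 0 < \<alpha> \<and> \<alpha> \<le> \<alpha>0 \<and> 0 < \<epsilon> \<and> \<epsilon> \<le> 1 \<and>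
           xs (real K * T) = x \<and>
           (\<forall>t\<in>{real K * T .. real (Suc K) * T}.
              (xs has_vector_derivative (\<alpha> *\<^sub>R efd_beta F \<xi> \<epsilon> t (xs t)))
                (at t within {real K * T .. real (Suc K) * T}))
           \<longrightarrow> (\<exists>s. norm s \<le> C * (\<alpha> + \<epsilon>\<^sup>2) \<and>
                 (\<forall>X. X \<noteq> {} \<and> closed X \<and> convex X \<longrightarrow>
                    closest_point X (x + \<alpha> *\<^sub>R integral {real K * T .. real (Suc K) * T}
                                         (\<lambda>\<tau>. efd_beta F \<xi> \<epsilon> \<tau> (xs \<tau>)))
                    = closest_point X (x - (\<alpha> * T) *\<^sub>R (gradF x + s))))"
  proof (rule exI[of _ C], intro allI impI)
    fix K :: nat and \<alpha> \<epsilon> :: real and x :: "real^'n" and xs :: "real \<Rightarrow> real^'n"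
    assume H: "norm x \<le> R \<and> 0 < \<alpha> \<and> \<alpha> \<le> \<alpha>0 \<and> 0 < \<epsilon> \<and> \<epsilon> \<le> 1 \<and>
           xs (real K * T) = x \<and>
           (\<forall>t\<in>{real K * T .. real (Suc K) * T}.
              (xs has_vector_derivative (\<alpha> *\<^sub>R efd_beta F \<xi> \<epsilon> t (xs t)))
                (at t within {real K * T .. real (Suc K) * T}))"
    define a where "a = real K * T"
    define b where "b = real (Suc K) * T"
    define I where "I = {a..b}"
    have ba: "b = a + T" unfolding a_def b_def by (simp add: algebra_simps)
    have ab: "a \<le> b" using ba T_pos by simp
    have nx: "norm x \<le> R" and al: "0 < \<alpha>" "\<alpha> \<le> \<alpha>0" and ep: "0 < \<epsilon>" "\<epsilon> \<le> 1"
      and x0: "xs a = x" using H by (auto simp: a_def)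
    define bt where "bt t = efd_beta F \<xi> \<epsilon> t (xs t)" for t
    have hd: "(xs has_vector_derivative (\<alpha> *\<^sub>R bt t)) (at t within I)" if "t \<in> I" for t
      using H that by (simp add: I_def a_def b_def bt_def)
    have MI: "norm (\<xi> t) \<le> M" if "t \<in> I" for t
      using Mb[of t K] that by (simp add: I_def a_def b_def)
    have xs_cont: "continuous_on I xs"
      using hd by (meson continuous_on_eq_continuous_within has_vector_derivative_continuous)
    have xi_I: "continuous_on I \<xi>" by (rule continuous_on_subset[OF xi_cont]) auto
    have bb: "norm (efd_beta F \<xi> \<epsilon> t y) \<le> A0 + B0 * norm y" if "t \<in> I" for t y
    proof -
      have "norm (efd_beta F \<xi> \<epsilon> t y) \<le> norm (\<xi> t) ^ 2 * (G0 + Lg * (norm y + norm (\<xi> t)))"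
        using beta_bound[OF F_deriv Lg ep] unfolding G0_def .
      also have "\<dots> \<le> M ^ 2 * (G0 + Lg * (norm y + M))"
        using MI[OF that] Lg0 M_nn unfolding G0_def
        by (intro mult_mono power_mono add_left_mono mult_left_mono add_left_mono) auto
      also have "\<dots> = A0 + B0 * norm y" unfolding A0_def B0_def by (simp add: algebra_simps)
      finally show ?thesis .
    qed
    (* Gronwall *)
    define k where "k = 4 * \<alpha> * c0"
    define w where "w u = 1 + xs u \<bullet> xs u" for u
    define w' where "w' u = 2 * (xs u \<bullet> (\<alpha> *\<^sub>R bt u))" for u
    have dw: "(w has_real_derivative w' t) (at t within I)" if "t \<in> I" for t
    proof -
      have "(xs has_derivative (\<lambda>h. h *\<^sub>R (\<alpha> *\<^sub>R bt t))) (at t within I)"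
        using hd[OF that] by (simp add: has_vector_derivative_def)
      then have "((\<lambda>u. 1 + xs u \<bullet> xs u) has_derivative (\<lambda>h. 0 + (xs t \<bullet> (h *\<^sub>R (\<alpha> *\<^sub>R bt t)) + (h *\<^sub>R (\<alpha> *\<^sub>R bt t)) \<bullet> xs t))) (at t within I)"
        by (intro has_derivative_add has_derivative_const has_derivative_inner)
      then show ?thesis unfolding has_field_derivative_def w_def w'_def
        by (rule has_derivative_eq_rhs) (auto simp: fun_eq_iff inner_commute algebra_simps)
    qed
    have w'b: "w' t \<le> k * w t" if "t \<in> I" for t
    proof -
      define r where "r = norm (xs t)"
      have r0: "0 \<le> r" by (simp add: r_def)
      have "w' t \<le> 2 * (r * norm (\<alpha> *\<^sub>R bt t))"
        unfolding w'_def r_def by (rule mult_left_mono[OF norm_cauchy_schwarz]) simp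
      also have "\<dots> = 2 * \<alpha> * (r * norm (bt t))" using al by (simp add: algebra_simps)
      also have "\<dots> \<le> 2 * \<alpha> * (r * (A0 + B0 * r))"
        using bb[OF that, of "xs t"] al r0 unfolding bt_def r_def by (intro mult_left_mono) auto
      also have "r * (A0 + B0 * r) \<le> c0 * (r + r^2)"
        using r0 A0_nn B0_nn unfolding c0_def by (simp add: algebra_simps power2_eq_square mult_right_mono)
      also have "2 * \<alpha> * (c0 * (r + r^2)) \<le> 2 * \<alpha> * (c0 * (2 * (1 + r^2)))"
        using r_le[of r] al c0_pos r0 by (intro mult_left_mono) (auto simp: power2_eq_square)
      also have "\<dots> = k * w t"
        unfolding k_def w_def r_def by (simp add: power2_norm_eq_inner algebra_simps)
      finally show ?thesis using al by (simp add: mult_left_mono)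
    qed
    define \<phi> where "\<phi> u = exp (- k * (u - a)) * w u" for u
    define \<phi>' where "\<phi>' u = exp (- k * (u - a)) * (- k) * w u + exp (- k * (u - a)) * w' u" for u
    have dphi: "(\<phi> has_real_derivative \<phi>' t) (at t within I)" if "t \<in> I" for t
    proof -
      have e: "((\<lambda>u. exp (- k * (u - a))) has_real_derivative exp (- k * (t - a)) * (- k)) (at t within I)"
        by (auto intro!: derivative_eq_intros)
      show ?thesis unfolding \<phi>_def \<phi>'_def using DERIV_mult[OF e dw[OF that]] by (simp add: mult.commute)
    qed
    have wb: "w t \<le> W" if "t \<in> I" for t
    proof -
      have tI: "a \<le> t" "t \<le> b" using that by (auto simp: I_def)
      have sub: "{a..t} \<subseteq> I" using tI by (auto simp: I_def)
      have "\<phi> t \<le> \<phi> a"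
      proof (rule mvt_nonpos[OF tI(1)])
        fix u assume u: "u \<in> {a..t}"
        then have uI: "u \<in> I" using sub by blast
        show "(\<phi> has_real_derivative \<phi>' u) (at u within {a..t})"
          by (rule DERIV_subset[OF dphi[OF uI] sub])
        have "\<phi>' u = exp (- k * (u - a)) * (w' u - k * w u)" unfolding \<phi>'_def by (simp add: algebra_simps)
        also have "\<dots> \<le> 0" using w'b[OF uI] by (simp add: mult_nonneg_nonpos)
        finally show "\<phi>' u \<le> 0" .
      qed
      then have "exp (- k * (t - a)) * w t \<le> w a" by (simp add: \<phi>_def)
      then have "exp (k * (t - a)) * (exp (- k * (t - a)) * w t) \<le> exp (k * (t - a)) * w a"
        by (intro mult_left_mono) auto
      then have w1: "w t \<le> exp (k * (t - a)) * w a"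
        by (simp add: mult.assoc[symmetric] exp_add[symmetric])
      have "k * (t - a) \<le> 4 * \<alpha>0 * c0 * T"
        unfolding k_def using al c0_pos tI ba T_pos
        by (intro mult_mono) (auto intro: mult_right_mono)
      then have "exp (k * (t - a)) \<le> exp (4 * \<alpha>0 * c0 * T)" by simp
      moreover have "w a \<le> 1 + R^2"
        using nx x0 unfolding w_def by (simp add: power2_norm_eq_inner[symmetric] power_mono)
      moreover have "0 \<le> w a" unfolding w_def by simp
      ultimately have "exp (k * (t - a)) * w a \<le> W" unfolding W_def
        by (intro mult_mono) auto
      then show ?thesis using w1 by simp
    qed
    have xsb: "norm (xs t) \<le> W" if "t \<in> I" for t
      using r_le[of "norm (xs t)"] wb[OF that] unfolding w_def by (simp add: power2_norm_eq_inner)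
    have btb: "norm (bt t) \<le> G" if "t \<in> I" for t
      using bb[OF that, of "xs t"] xsb[OF that] B0_nn unfolding G_def bt_def
      by (meson add_left_mono mult_left_mono order_trans)
    have dist: "norm (xs t - x) \<le> \<alpha> * G * T" if "t \<in> I" for t
    proof -
      have "norm (xs t - xs a) \<le> (\<alpha> * G) * norm (t - a)"
      proof (rule differentiable_bound[of I])
        show "convex I" by (simp add: I_def)
        fix u assume u: "u \<in> I"
        show "(xs has_derivative (\<lambda>h. h *\<^sub>R (\<alpha> *\<^sub>R bt u))) (at u within I)"
          using hd[OF u] by (simp add: has_vector_derivative_def)
        have "onorm (\<lambda>h::real. h *\<^sub>R (\<alpha> *\<^sub>R bt u)) = onorm (\<lambda>h::real. h) * norm (\<alpha> *\<^sub>R bt u)"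
          by (rule onorm_scaleR_left) (rule bounded_linear_ident)
        also have "\<dots> = \<alpha> * norm (bt u)" using al by (simp add: onorm_id)
        also have "\<dots> \<le> \<alpha> * G" using btb[OF u] al by simp
        finally show "onorm (\<lambda>h::real. h *\<^sub>R (\<alpha> *\<^sub>R bt u)) \<le> \<alpha> * G" .
      qed (use that ab in \<open>auto simp: I_def\<close>)
      also have "\<dots> \<le> (\<alpha> * G) * T"
        using that ba al G_nn by (intro mult_left_mono) (auto simp: I_def)
      finally show ?thesis using x0 by simp
    qed
    define f0 where "f0 \<tau> = efd_beta F \<xi> \<epsilon> \<tau> x" for \<tau>
    define f2 where "f2 \<tau> = (gradF x \<bullet> \<xi> \<tau>) *\<^sub>R \<xi> \<tau>" for \<tau>
    have c_bt: "continuous_on I bt" unfolding bt_def by (rule cont_beta[OF F_deriv xs_cont xi_I])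
    have c_f0: "continuous_on I f0" unfolding f0_def by (rule cont_beta[OF F_deriv continuous_on_const xi_I])
    have c_f2: "continuous_on I f2" unfolding f2_def by (intro continuous_intros xi_I)
    have i_bt: "bt integrable_on I" and i_f0: "f0 integrable_on I" and i_f2: "f2 integrable_on I"
      using c_bt c_f0 c_f2 by (auto simp: I_def intro: integrable_continuous_interval)
    define E1 where "E1 = integral I (\<lambda>\<tau>. bt \<tau> - f0 \<tau>)"
    define E2 where "E2 = integral I (\<lambda>\<tau>. f0 \<tau> + f2 \<tau>)"
    have cI: "Henstock_Kurzweil_Integration.content I = T" using ab ba by (simp add: I_def content_real)
    have E1b: "norm E1 \<le> (Lg * M^2 * (\<alpha> * G * T)) * T"
    proof -
      have "norm E1 \<le> (Lg * M^2 * (\<alpha> * G * T)) * Henstock_Kurzweil_Integration.content I"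
        unfolding I_def E1_def
      proof (rule has_integral_bound_real[OF _ finite.emptyI])
        show "0 \<le> Lg * M^2 * (\<alpha> * G * T)" using Lg0 al G_nn T_pos by simp
        show "((\<lambda>\<tau>. bt \<tau> - f0 \<tau>) has_integral integral {a..b} (\<lambda>\<tau>. bt \<tau> - f0 \<tau>)) {a..b}"
          using integrable_integral[OF integrable_diff[OF i_bt i_f0]] by (simp add: I_def)
        fix \<tau> assume "\<tau> \<in> {a..b} - {}"
        then have \<tau>: "\<tau> \<in> I" by (simp add: I_def)
        have "norm (bt \<tau> - f0 \<tau>) \<le> Lg * norm (\<xi> \<tau>) ^ 2 * norm (xs \<tau> - x)"
          unfolding bt_def f0_def by (rule beta_lip[OF F_deriv Lg ep(1)])
        also have "\<dots> \<le> Lg * M^2 * (\<alpha> * G * T)"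
          using MI[OF \<tau>] dist[OF \<tau>] Lg0 by (intro mult_mono mult_left_mono power_mono) auto
        finally show "norm (bt \<tau> - f0 \<tau>) \<le> Lg * M^2 * (\<alpha> * G * T)" .
      qed
      then show ?thesis using cI by simp
    qed
    have E2b: "norm E2 \<le> (c * LH * \<epsilon>\<^sup>2 * M^4) * T"
    proof -
      have "norm E2 \<le> (c * LH * \<epsilon>\<^sup>2 * M^4) * Henstock_Kurzweil_Integration.content I"
        unfolding I_def E2_def
      proof (rule has_integral_bound_real[OF _ finite.emptyI])
        show "0 \<le> c * LH * \<epsilon>\<^sup>2 * M^4" using c_nn LH0 M_nn by simp
        show "((\<lambda>\<tau>. f0 \<tau> + f2 \<tau>) has_integral integral {a..b} (\<lambda>\<tau>. f0 \<tau> + f2 \<tau>)) {a..b}"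
          using integrable_integral[OF integrable_add[OF i_f0 i_f2]] by (simp add: I_def)
        fix \<tau> assume "\<tau> \<in> {a..b} - {}"
        then have \<tau>: "\<tau> \<in> I" by (simp add: I_def)
        have "norm (f0 \<tau> + f2 \<tau>) \<le> c * LH * \<epsilon>\<^sup>2 * norm (\<xi> \<tau>) ^ 4"
          unfolding f0_def f2_def c_def by (rule beta_approx[OF F_deriv grad_deriv LH ep(1)])
        also have "\<dots> \<le> c * LH * \<epsilon>\<^sup>2 * M^4"
          using MI[OF \<tau>] c_nn LH0 by (intro mult_left_mono power_mono) auto
        finally show "norm (f0 \<tau> + f2 \<tau>) \<le> c * LH * \<epsilon>\<^sup>2 * M^4" .
      qed
      then show ?thesis using cI by simp
    qed
    have E3: "integral I f2 = T *\<^sub>R gradF x"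
    proof -
      define Ou where "Ou = (\<lambda>\<tau>. outer (\<xi> \<tau>) (\<xi> \<tau>))"
      have pe: "(1 / T) *\<^sub>R integral I Ou = mat 1"
        using xi_pe[rule_format, of a] ba by (simp add: I_def Ou_def)
      have mat0: "(mat 1 :: real^'n^'n) \<noteq> 0"
      proof
        assume "(mat 1 :: real^'n^'n) = 0"
        then have "(mat 1 :: real^'n^'n) $ undefined $ undefined = 0" by simp
        then show False by (simp add: mat_def)
      qed
      have iOu: "Ou integrable_on I"
      proof (rule ccontr)
        assume "\<not> Ou integrable_on I"
        then have "integral I Ou = 0" by (rule not_integrable_integral)
        then show False using pe mat0 by simp
      qed
      have intOu: "integral I Ou = T *\<^sub>R mat 1"
      proof -
        have "integral I Ou = T *\<^sub>R ((1 / T) *\<^sub>R integral I Ou)" using T_pos by simp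
        then show ?thesis using pe by simp
      qed
      have "f2 = (\<lambda>A. A *v gradF x) \<circ> Ou" by (simp add: fun_eq_iff f2_def Ou_def outer_mv)
      then have "integral I f2 = integral I Ou *v gradF x"
        using integral_linear[OF iOu bl_mv] by simp
      also have "\<dots> = T *\<^sub>R gradF x"
      proof -
        have "(T *\<^sub>R mat 1) *v gradF x = T *\<^sub>R (mat 1 *v gradF x)"
          by (simp add: vec_eq_iff matrix_vector_mult_def sum_distrib_left mult.assoc)
        then show ?thesis unfolding intOu by (simp add: matrix_vector_mul_lid)
      qed
      finally show ?thesis .
    qed
    have Eq: "integral I bt = E1 + E2 - T *\<^sub>R gradF x"
    proof -
      have "E1 = integral I bt - integral I f0" unfolding E1_def by (rule integral_diff[OF i_bt i_f0])
      moreover have "E2 = integral I f0 + integral I f2" unfolding E2_def by (rule integral_add[OF i_f0 i_f2])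
      ultimately show ?thesis using E3 by (simp add: algebra_simps)
    qed
    define s where "s = - (1 / T) *\<^sub>R (E1 + E2)"
    have sb: "norm s \<le> C * (\<alpha> + \<epsilon>\<^sup>2)"
    proof -
      have "norm s = (norm (E1 + E2)) / T" using T_pos by (simp add: s_def)
      also have "\<dots> \<le> (norm E1 + norm E2) / T"
        using T_pos by (intro divide_right_mono norm_triangle_ineq) auto
      also have "\<dots> \<le> ((Lg * M^2 * (\<alpha> * G * T)) * T + (c * LH * \<epsilon>\<^sup>2 * M^4) * T) / T"
        using T_pos E1b E2b by (intro divide_right_mono add_mono) auto
      also have "\<dots> = (Lg * M^2 * G * T) * \<alpha> + (c * LH * M^4) * \<epsilon>\<^sup>2"
        using T_pos by (simp add: field_simps)
      also have "\<dots> \<le> C * (\<alpha> + \<epsilon>\<^sup>2)"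
      proof -
        have "0 \<le> (Lg * M^2 * G * T) * \<epsilon>\<^sup>2" using Lg0 G_nn T_pos by simp
        moreover have "0 \<le> (c * LH * M^4) * \<alpha>" using c_nn LH0 al by simp
        ultimately show ?thesis unfolding C_def distrib_left distrib_right by linarith
      qed
      finally show ?thesis .
    qed
    have argeq: "x + \<alpha> *\<^sub>R integral I bt = x - (\<alpha> * T) *\<^sub>R (gradF x + s)"
      unfolding Eq s_def using T_pos by (simp add: algebra_simps)
    show "\<exists>s. norm s \<le> C * (\<alpha> + \<epsilon>\<^sup>2) \<and>
                 (\<forall>X. X \<noteq> {} \<and> closed X \<and> convex X \<longrightarrow>
                    closest_point X (x + \<alpha> *\<^sub>R integral {real K * T .. real (Suc K) * T}
                                         (\<lambda>\<tau>. efd_beta F \<xi> \<epsilon> \<tau> (xs \<tau>)))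
                    = closest_point X (x - (\<alpha> * T) *\<^sub>R (gradF x + s)))"
      using sb argeq unfolding I_def a_def b_def bt_def by (metis (no_types, lifting))
  qed
qed

end
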